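(* Let $G$ be a finitely generated group and $H\le K\le G$ subgroups such that $H\backslash G$ is narrow. Then either $[G:K]<\infty$ or $[K:H]<\infty$.
   Context: $H\backslash G$ is narrow if the Schreier coset graph $H\backslash\mathrm{Cay}(G,S)$ (quotient of the Cayley graph by the left $H$-action, edges of length 1) is narrow for some (equivalently any) finite generating set $S$. An unbounded connected graph $Y$ is narrow if for each $\mu\ge1$ there is $L(\mu)$ such that any $L(\mu)+1$ unbounded $\mu$-coarsely connected vertex subsets of $Y$ include two that intersect (a vertex subset $Z$ is $\mu$-coarsely connected if any two points of $Z$ are joined by a chain in $Z$ with consecutive distances at most $\mu$). *)

theory Defs
  imports "HOL-Algebra.Algebra"
begin

definition dist_le :: "'v set \<Rightarrow> ('v \<times> 'v) set \<Rightarrow> nat \<Rightarrow> 'v \<Rightarrow> 'v \<Rightarrow> bool" where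
  "dist_le V E n x y \<longleftrightarrow> (x, y) \<in> (E \<union> Id_on V) ^^ n"

definition unbounded_set :: "'v set \<Rightarrow> ('v \<times> 'v) set \<Rightarrow> 'v set \<Rightarrow> bool" where
  "unbounded_set V E Z \<longleftrightarrow> (\<forall>n. \<exists>x\<in>Z. \<exists>y\<in>Z. \<not> dist_le V E n x y)"

definition coarsely_connected :: "'v set \<Rightarrow> ('v \<times> 'v) set \<Rightarrow> nat \<Rightarrow> 'v set \<Rightarrow> bool" where
  "coarsely_connected V E \<mu> Z \<longleftrightarrow>
     (\<forall>x\<in>Z. \<forall>y\<in>Z. (x, y) \<in> {(a, b). a \<in> Z \<and> b \<in> Z \<and> dist_le V E \<mu> a b}\<^sup>*)"

definition connected_graph :: "'v set \<Rightarrow> ('v \<times> 'v) set \<Rightarrow> bool" where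
  "connected_graph V E \<longleftrightarrow> (\<forall>x\<in>V. \<forall>y\<in>V. \<exists>n. dist_le V E n x y)"

definition narrow_graph :: "'v set \<Rightarrow> ('v \<times> 'v) set \<Rightarrow> bool" where
  "narrow_graph V E \<longleftrightarrow> connected_graph V E \<and> unbounded_set V E V \<and>
     (\<forall>\<mu>::nat. \<mu> \<ge> 1 \<longrightarrow> (\<exists>L::nat. \<forall>Z :: nat \<Rightarrow> 'v set.
        (\<forall>i\<le>L. Z i \<subseteq> V \<and> unbounded_set V E (Z i) \<and> coarsely_connected V E \<mu> (Z i))
        \<longrightarrow> (\<exists>i\<le>L. \<exists>j\<le>L. i \<noteq> j \<and> Z i \<inter> Z j \<noteq> {})))"

definition schreier_edges :: "('a, 'b) monoid_scheme \<Rightarrow> 'a set \<Rightarrow> 'a set \<Rightarrow> ('a set \<times> 'a set) set" where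
  "schreier_edges G H S =
     (let E0 = {(H #>\<^bsub>G\<^esub> g, H #>\<^bsub>G\<^esub> (g \<otimes>\<^bsub>G\<^esub> s)) | g s. g \<in> carrier G \<and> s \<in> S}
      in E0 \<union> E0\<inverse>)"

definition narrow_coset_space :: "('a, 'b) monoid_scheme \<Rightarrow> 'a set \<Rightarrow> bool" where
  "narrow_coset_space G H \<longleftrightarrow>
     (\<exists>S. finite S \<and> S \<subseteq> carrier G \<and> generate G S = carrier G \<and>
          narrow_graph (rcosets\<^bsub>G\<^esub> H) (schreier_edges G H S))"

end

theory Submission
  imports Defs
begin

fun Wd :: "('a, 'b) monoid_scheme \<Rightarrow> 'a set \<Rightarrow> nat \<Rightarrow> 'a set" where
  "Wd G S 0 = {\<one>\<^bsub>G\<^esub>}"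
| "Wd G S (Suc n) = Wd G S n \<union> (\<lambda>(w,s). w \<otimes>\<^bsub>G\<^esub> s) ` (Wd G S n \<times> S)
     \<union> (\<lambda>(w,s). w \<otimes>\<^bsub>G\<^esub> inv\<^bsub>G\<^esub> s) ` (Wd G S n \<times> S)"

context group
begin

lemma Wd_finite: "finite S \<Longrightarrow> finite (Wd G S n)"
  by (induction n) auto

lemma Wd_carrier: "S \<subseteq> carrier G \<Longrightarrow> Wd G S n \<subseteq> carrier G"
  by (induction n) auto

lemma walk_lemma:
  assumes H: "subgroup H G" and S: "S \<subseteq> carrier G" and a: "a \<in> carrier G"
  shows "(H #> a, c) \<in> (schreier_edges G H S \<union> Id_on (rcosets H)) ^^ n
     \<Longrightarrow> \<exists>w\<in>Wd G S n. c = H #> (a \<otimes> w)"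
proof (induction n arbitrary: c)
  case 0
  then show ?case using a by simp
next
  case (Suc n)
  have Hc: "H \<subseteq> carrier G" using H subgroup.subset by blast
  from Suc.prems obtain c' where c1: "(H #> a, c') \<in> (schreier_edges G H S \<union> Id_on (rcosets H)) ^^ n"
    and c2: "(c', c) \<in> schreier_edges G H S \<union> Id_on (rcosets H)" by auto
  from Suc.IH[OF c1] obtain w where w: "w \<in> Wd G S n" "c' = H #> (a \<otimes> w)" by blast
  have wc: "w \<in> carrier G" using w(1) Wd_carrier[OF S] by blast
  from c2 consider "c = c'"
    | g s where "g \<in> carrier G" "s \<in> S" "c' = H #> g" "c = H #> (g \<otimes> s)"
    | g s where "g \<in> carrier G" "s \<in> S" "c = H #> g" "c' = H #> (g \<otimes> s)"
    unfolding schreier_edges_def Let_def by blast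
  then show ?case
  proof cases
    case 1 then show ?thesis using w by auto
  next
    case (2 g s)
    have sc: "s \<in> carrier G" using 2 S by blast
    have "c = (H #> g) #> s" using 2 coset_mult_assoc[OF Hc] sc by simp
    also have "\<dots> = (H #> (a \<otimes> w)) #> s" using 2 w by simp
    also have "\<dots> = H #> (a \<otimes> (w \<otimes> s))" using coset_mult_assoc[OF Hc] a wc sc by (simp add: m_assoc)
    finally show ?thesis using w(1) 2 by force
  next
    case (3 g s)
    have sc: "s \<in> carrier G" using 3 S by blast
    have "c = (H #> (g \<otimes> s)) #> inv s" using 3 coset_mult_assoc[OF Hc] sc by (simp add: m_assoc)
    also have "\<dots> = (H #> (a \<otimes> w)) #> inv s" using 3 w by simp
    also have "\<dots> = H #> (a \<otimes> (w \<otimes> inv s))" using coset_mult_assoc[OF Hc] a wc sc by (simp add: m_assoc)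
    finally show ?thesis using w(1) 3 by force
  qed
qed

lemma proj_coset:
  assumes "subgroup H G" "subgroup K G" "H \<subseteq> K" "b \<in> carrier G" "b' \<in> carrier G"
    "H #> b = H #> b'"
  shows "K #> b = K #> b'"
proof -
  have "b \<in> H #> b'" using assms rcos_self by metis
  hence "b \<in> K #> b'" using assms(3) unfolding r_coset_def by blast
  thus ?thesis using repr_independence assms by metis
qed

end

theorem mainTheorem11:
  fixes G (structure) and H K :: "'a set"
  assumes "group G"
    and "\<exists>S. finite S \<and> S \<subseteq> carrier G \<and> generate G S = carrier G"
    and "subgroup H G" and "subgroup K G" and "H \<subseteq> K"
    and "narrow_coset_space G H"
  shows "finite (rcosets K) \<or> finite (rcosets\<^bsub>G\<lparr>carrier := K\<rparr>\<^esub> H)"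
proof (rule ccontr)
  assume "\<not> (finite (rcosets K) \<or> finite (rcosets\<^bsub>G\<lparr>carrier := K\<rparr>\<^esub> H))"
  hence infK: "infinite (rcosets K)" and infH: "infinite (rcosets\<^bsub>G\<lparr>carrier := K\<rparr>\<^esub> H)" by auto
  interpret group G by fact
  have Hs: "subgroup H G" and Ks: "subgroup K G" and HK: "H \<subseteq> K" by fact+
  have Hc: "H \<subseteq> carrier G" and Kc: "K \<subseteq> carrier G" using Hs Ks subgroup.subset by blast+
  obtain S where Sfin: "finite S" and Sc: "S \<subseteq> carrier G" and Sgen: "generate G S = carrier G"
    and nar: "narrow_graph (rcosets H) (schreier_edges G H S)"
    using assms(6) unfolding narrow_coset_space_def by blast
  define R where "R T = {(a,b). a\<in>T \<and> b\<in>T \<and> (\<exists>s\<in>S. b = a \<otimes> s \<or> a = b \<otimes> s)}" for T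
  have Rmono: "T \<subseteq> T' \<Longrightarrow> R T \<subseteq> R T'" for T T' unfolding R_def by auto
  define Fam where "Fam = {T. T \<subseteq> carrier G \<and> \<one> \<in> T \<and> inj_on (\<lambda>g. K #> g) T \<and> (\<forall>t\<in>T. (\<one>,t) \<in> (R T)\<^sup>*)}"
  have "\<exists>T\<in>Fam. \<forall>M\<in>Fam. T \<subseteq> M \<longrightarrow> M = T"
  proof (rule subset_Zorn_nonempty)
    show "Fam \<noteq> {}" unfolding Fam_def by auto
  next
    fix C assume C: "C \<noteq> {}" "subset.chain Fam C"
    hence CF: "C \<subseteq> Fam" and ch: "\<forall>M\<in>C. \<forall>Y\<in>C. M \<subseteq> Y \<or> Y \<subseteq> M"
      unfolding subset.chain_def by auto
    have "\<Union>C \<subseteq> carrier G" using CF unfolding Fam_def by auto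
    moreover have "\<one> \<in> \<Union>C" using C(1) CF unfolding Fam_def by auto
    moreover have "inj_on (\<lambda>g. K #> g) (\<Union>C)"
    proof (rule inj_onI)
      fix x y assume "x \<in> \<Union>C" "y \<in> \<Union>C" "K #> x = K #> y"
      then obtain M Y where "M \<in> C" "Y \<in> C" "x \<in> M" "y \<in> Y" by auto
      with ch consider "x \<in> Y" | "y \<in> M" by blast
      then show "x = y" using \<open>K #> x = K #> y\<close> \<open>M \<in> C\<close> \<open>Y \<in> C\<close> \<open>x \<in> M\<close> \<open>y \<in> Y\<close> CF
        unfolding Fam_def by (cases; auto dest: inj_onD)
    qed
    moreover have "\<forall>t\<in>\<Union>C. (\<one>,t) \<in> (R (\<Union>C))\<^sup>*"
    proof
      fix t assume "t \<in> \<Union>C"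
      then obtain M where M: "M \<in> C" "t \<in> M" by auto
      hence "(\<one>,t) \<in> (R M)\<^sup>*" using CF unfolding Fam_def by auto
      moreover have "R M \<subseteq> R (\<Union>C)" using Rmono M by blast
      ultimately show "(\<one>,t) \<in> (R (\<Union>C))\<^sup>*" using rtrancl_mono by blast
    qed
    ultimately show "\<Union>C \<in> Fam" unfolding Fam_def by blast
  qed
  then obtain T where TF: "T \<in> Fam" and Tmax: "\<And>M. M \<in> Fam \<Longrightarrow> T \<subseteq> M \<Longrightarrow> M = T" by blast
  have Tc: "T \<subseteq> carrier G" and T1: "\<one> \<in> T" and Tinj: "inj_on (\<lambda>g. K #> g) T"
    and Tconn: "\<forall>t\<in>T. (\<one>,t) \<in> (R T)\<^sup>*" using TF unfolding Fam_def by auto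
  have ext: "\<exists>t'\<in>T. K #> u = K #> t'"
    if t: "t \<in> T" and u: "u \<in> carrier G" and s: "s \<in> S" and tu: "u = t \<otimes> s \<or> t = u \<otimes> s" for t u s
  proof (rule ccontr)
    assume no: "\<not> (\<exists>t'\<in>T. K #> u = K #> t')"
    hence uT: "u \<notin> T" by blast
    have "insert u T \<in> Fam"
      unfolding Fam_def
    proof (intro CollectI conjI)
      show "insert u T \<subseteq> carrier G" using Tc u by auto
      show "\<one> \<in> insert u T" using T1 by auto
      show "inj_on (\<lambda>g. K #> g) (insert u T)" using Tinj no uT by auto
      have RR: "R T \<subseteq> R (insert u T)" using Rmono by blast
      have tu': "(t,u) \<in> R (insert u T)" using t s tu unfolding R_def by auto
      show "\<forall>x\<in>insert u T. (\<one>, x) \<in> (R (insert u T))\<^sup>*"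
      proof
        fix x assume "x \<in> insert u T"
        then consider "x = u" | "x \<in> T" by blast
        then show "(\<one>, x) \<in> (R (insert u T))\<^sup>*"
        proof cases
          case 1
          have "(\<one>,t) \<in> (R (insert u T))\<^sup>*" using Tconn t rtrancl_mono[OF RR] by blast
          then show ?thesis using tu' 1 by simp
        next
          case 2
          then show ?thesis using Tconn rtrancl_mono[OF RR] by blast
        qed
      qed
    qed
    hence "insert u T = T" using Tmax by blast
    thus False using uT by blast
  qed
  have gen: "\<forall>y\<in>carrier G. (\<exists>t\<in>T. K #> y = K #> t) \<longrightarrow> (\<exists>t\<in>T. K #> (y \<otimes> x) = K #> t)"
    if "x \<in> generate G S" for x
    using that
  proof (induction x rule: generate.induct)
    case one
    then show ?case by auto
  next
    case (incl h)
    show ?case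
    proof (intro ballI impI)
      fix y assume y: "y \<in> carrier G" "\<exists>t\<in>T. K #> y = K #> t"
      then obtain t where t: "t \<in> T" "K #> y = K #> t" by blast
      have hc: "h \<in> carrier G" using incl Sc by blast
      have tc: "t \<in> carrier G" using t Tc by blast
      obtain t' where "t' \<in> T" "K #> (t \<otimes> h) = K #> t'"
        using ext[OF t(1) _ incl, of "t \<otimes> h"] tc hc by auto
      have "K #> (y \<otimes> h) = (K #> y) #> h" using coset_mult_assoc[OF Kc] y hc by simp
      also have "\<dots> = K #> (t \<otimes> h)" using t coset_mult_assoc[OF Kc] tc hc by simp
      also have "\<dots> = K #> t'" by fact
      finally show "\<exists>t\<in>T. K #> (y \<otimes> h) = K #> t" using \<open>t' \<in> T\<close> by blast
    qed
  next
    case (inv h)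
    show ?case
    proof (intro ballI impI)
      fix y assume y: "y \<in> carrier G" "\<exists>t\<in>T. K #> y = K #> t"
      then obtain t where t: "t \<in> T" "K #> y = K #> t" by blast
      have hc: "h \<in> carrier G" using inv Sc by blast
      have tc: "t \<in> carrier G" using t Tc by blast
      obtain t' where "t' \<in> T" "K #> (t \<otimes> inv h) = K #> t'"
        using ext[OF t(1) _ inv, of "t \<otimes> inv h"] tc hc by (auto simp: m_assoc)
      have "K #> (y \<otimes> inv h) = (K #> y) #> inv h" using coset_mult_assoc[OF Kc] y hc by simp
      also have "\<dots> = K #> (t \<otimes> inv h)" using t coset_mult_assoc[OF Kc] tc hc by simp
      also have "\<dots> = K #> t'" by fact
      finally show "\<exists>t\<in>T. K #> (y \<otimes> inv h) = K #> t" using \<open>t' \<in> T\<close> by blast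
    qed
  next
    case (eng h1 h2)
    have c1: "h1 \<in> carrier G" "h2 \<in> carrier G" using eng.hyps Sgen by auto
    show ?case
    proof (intro ballI impI)
      fix y assume y: "y \<in> carrier G" "\<exists>t\<in>T. K #> y = K #> t"
      hence "\<exists>t\<in>T. K #> (y \<otimes> h1) = K #> t" using eng.IH(1) by blast
      hence "\<exists>t\<in>T. K #> (y \<otimes> h1 \<otimes> h2) = K #> t" using eng.IH(2) y c1 by blast
      thus "\<exists>t\<in>T. K #> (y \<otimes> (h1 \<otimes> h2)) = K #> t" using y c1 by (simp add: m_assoc)
    qed
  qed
  have surj: "\<exists>t\<in>T. K #> x = K #> t" if "x \<in> carrier G" for x
    using gen[of x] that Sgen T1 by force
  have Rsym: "(a,b) \<in> R T \<Longrightarrow> (b,a) \<in> R T" for a b unfolding R_def by auto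
  have conn: "(a,b) \<in> (R T)\<^sup>*" if "a \<in> T" "b \<in> T" for a b
  proof -
    have "(\<one>,a) \<in> (R T)\<^sup>*" using Tconn that by blast
    hence "(a,\<one>) \<in> ((R T)\<inverse>)\<^sup>*" by (rule rtrancl_converseI)
    moreover have "(R T)\<inverse> = R T" using Rsym by auto
    ultimately have "(a,\<one>) \<in> (R T)\<^sup>*" by simp
    thus ?thesis using Tconn that by (meson rtrancl_trans)
  qed
  obtain L where Lprop: "\<And>Z :: nat \<Rightarrow> 'a set set.
        (\<forall>i\<le>L. Z i \<subseteq> rcosets H \<and> unbounded_set (rcosets H) (schreier_edges G H S) (Z i)
           \<and> coarsely_connected (rcosets H) (schreier_edges G H S) 1 (Z i))
        \<Longrightarrow> (\<exists>i\<le>L. \<exists>j\<le>L. i \<noteq> j \<and> Z i \<inter> Z j \<noteq> {})"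
  proof -
    have "\<forall>\<mu>::nat. \<mu> \<ge> 1 \<longrightarrow> (\<exists>L::nat. \<forall>Z :: nat \<Rightarrow> 'a set set.
        (\<forall>i\<le>L. Z i \<subseteq> rcosets H \<and> unbounded_set (rcosets H) (schreier_edges G H S) (Z i)
           \<and> coarsely_connected (rcosets H) (schreier_edges G H S) \<mu> (Z i))
        \<longrightarrow> (\<exists>i\<le>L. \<exists>j\<le>L. i \<noteq> j \<and> Z i \<inter> Z j \<noteq> {}))"
      using nar unfolding narrow_graph_def by blast
    from this[rule_format, of 1] show ?thesis using that by blast
  qed
  have RC: "rcosets\<^bsub>G\<lparr>carrier := K\<rparr>\<^esub> H = (\<lambda>k. H #> k) ` K"
    unfolding RCOSETS_def r_coset_def by auto
  obtain f :: "nat \<Rightarrow> 'a set" where finj: "inj f" and frange: "range f \<subseteq> rcosets\<^bsub>G\<lparr>carrier := K\<rparr>\<^esub> H"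
    using infinite_countable_subset[OF infH] by blast
  have "\<forall>i. \<exists>k. k \<in> K \<and> f i = H #> k" using frange RC by blast
  then obtain k where kK: "\<And>i. k i \<in> K" and fk: "\<And>i. f i = H #> k i" by metis
  have kc: "k i \<in> carrier G" for i using kK Kc by blast
  define Z where "Z i = (\<lambda>t. H #> (k i \<otimes> t)) ` T" for i
  define V where "V = rcosets H"
  define E where "E = schreier_edges G H S"
  have Kk: "K #> (k i \<otimes> t) = K #> t" if "t \<in> carrier G" for i t
  proof -
    have "K #> (k i \<otimes> t) = (K #> k i) #> t" using coset_mult_assoc[OF Kc] kc that by simp
    also have "K #> k i = K" using subgroup.rcos_const[OF Ks] kK by (simp add: is_group)
    finally show ?thesis .
  qed
  have e0: "(H #> g, H #> (g \<otimes> s)) \<in> schreier_edges G H S" if "g \<in> carrier G" "s \<in> S" for g s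
    unfolding schreier_edges_def Let_def using that by blast
  have e1: "(H #> (g \<otimes> s), H #> g) \<in> schreier_edges G H S" if "g \<in> carrier G" "s \<in> S" for g s
    unfolding schreier_edges_def Let_def using that by blast
  have "\<exists>i\<le>L. \<exists>j\<le>L. i \<noteq> j \<and> Z i \<inter> Z j \<noteq> {}"
  proof (rule Lprop, intro allI impI conjI)
    fix i
    show "Z i \<subseteq> rcosets H" unfolding Z_def using rcosetsI[OF Hc] kc Tc by auto
    show "unbounded_set (rcosets H) (schreier_edges G H S) (Z i)"
      unfolding unbounded_set_def
    proof
      fix n
      show "\<exists>x\<in>Z i. \<exists>y\<in>Z i. \<not> dist_le (rcosets H) (schreier_edges G H S) n x y"
      proof (rule ccontr)
        assume "\<not> ?thesis"
        hence all: "\<forall>x\<in>Z i. \<forall>y\<in>Z i. dist_le (rcosets H) (schreier_edges G H S) n x y" by blast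
        have "rcosets K \<subseteq> (\<lambda>w. K #> w) ` Wd G S n"
        proof
          fix c assume "c \<in> rcosets K"
          then obtain x where x: "x \<in> carrier G" "c = K #> x" unfolding RCOSETS_def by auto
          then obtain t where t: "t \<in> T" "K #> x = K #> t" using surj by blast
          have tc: "t \<in> carrier G" using t Tc by blast
          have "H #> (k i \<otimes> \<one>) \<in> Z i" "H #> (k i \<otimes> t) \<in> Z i" unfolding Z_def using T1 t by auto
          hence "dist_le (rcosets H) (schreier_edges G H S) n (H #> k i) (H #> (k i \<otimes> t))"
            using all kc by auto
          then obtain w where w: "w \<in> Wd G S n" "H #> (k i \<otimes> t) = H #> (k i \<otimes> w)"
            using walk_lemma[OF Hs Sc kc] unfolding dist_le_def by blast
          have wc: "w \<in> carrier G" using w Wd_carrier[OF Sc] by blast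
          have "K #> (k i \<otimes> t) = K #> (k i \<otimes> w)"
            using proj_coset[OF Hs Ks HK _ _ w(2)] kc tc wc by simp
          hence "K #> t = K #> w" using Kk tc wc by simp
          thus "c \<in> (\<lambda>w. K #> w) ` Wd G S n" using x t w by auto
        qed
        hence "finite (rcosets K)" using Wd_finite[OF Sfin] finite_subset by blast
        thus False using infK by blast
      qed
    qed
    show "coarsely_connected (rcosets H) (schreier_edges G H S) 1 (Z i)"
      unfolding coarsely_connected_def
    proof (intro ballI)
      fix x y assume "x \<in> Z i" "y \<in> Z i"
      then obtain a b where ab: "a \<in> T" "b \<in> T" "x = H #> (k i \<otimes> a)" "y = H #> (k i \<otimes> b)"
        unfolding Z_def by auto
      let ?Q = "{(a, b). a \<in> Z i \<and> b \<in> Z i \<and> dist_le (rcosets H) (schreier_edges G H S) 1 a b}"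
      have "(H #> (k i \<otimes> a), H #> (k i \<otimes> b)) \<in> ?Q\<^sup>*" using conn[OF ab(1,2)]
      proof (induction rule: rtrancl_induct)
        case base then show ?case by simp
      next
        case (step b c)
        from step.hyps(2) have bc: "b \<in> T" "c \<in> T" and s: "\<exists>s\<in>S. c = b \<otimes> s \<or> b = c \<otimes> s"
          unfolding R_def by auto
        have bcc: "b \<in> carrier G" "c \<in> carrier G" using bc Tc by auto
        have "(H #> (k i \<otimes> b), H #> (k i \<otimes> c)) \<in> schreier_edges G H S"
        proof -
          from s obtain s where s: "s \<in> S" "c = b \<otimes> s \<or> b = c \<otimes> s" by blast
          have sc: "s \<in> carrier G" using s Sc by blast
          from s(2) show ?thesis
          proof
            assume "c = b \<otimes> s"
            hence "k i \<otimes> c = (k i \<otimes> b) \<otimes> s" using kc bcc sc by (simp add: m_assoc)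
            thus ?thesis using e0[of "k i \<otimes> b" s] kc bcc s(1) by simp
          next
            assume "b = c \<otimes> s"
            hence "k i \<otimes> b = (k i \<otimes> c) \<otimes> s" using kc bcc sc by (simp add: m_assoc)
            thus ?thesis using e1[of "k i \<otimes> c" s] kc bcc s(1) by simp
          qed
        qed
        hence "dist_le (rcosets H) (schreier_edges G H S) 1 (H #> (k i \<otimes> b)) (H #> (k i \<otimes> c))"
          unfolding dist_le_def by simp
        moreover have "H #> (k i \<otimes> b) \<in> Z i" "H #> (k i \<otimes> c) \<in> Z i" unfolding Z_def using bc by auto
        ultimately show ?case using step.IH by (simp add: rtrancl.rtrancl_into_rtrancl)
      qed
      thus "(x, y) \<in> ?Q\<^sup>*" using ab by simp
    qed
  qed
  then obtain i j where ij: "i \<noteq> j" "Z i \<inter> Z j \<noteq> {}" by blast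
  then obtain t t' where tt: "t \<in> T" "t' \<in> T" "H #> (k i \<otimes> t) = H #> (k j \<otimes> t')"
    unfolding Z_def by auto
  have tc: "t \<in> carrier G" "t' \<in> carrier G" using tt Tc by auto
  have "K #> (k i \<otimes> t) = K #> (k j \<otimes> t')" using proj_coset[OF Hs Ks HK _ _ tt(3)] kc tc by simp
  hence "K #> t = K #> t'" using Kk tc by simp
  hence "t = t'" using Tinj tt inj_onD by metis
  have "H #> k i = (H #> (k i \<otimes> t)) #> inv t" using coset_mult_assoc[OF Hc] kc tc by (simp add: m_assoc)
  also have "\<dots> = (H #> (k j \<otimes> t)) #> inv t" using tt \<open>t = t'\<close> by simp
  also have "\<dots> = H #> k j" using coset_mult_assoc[OF Hc] kc tc by (simp add: m_assoc)
  finally have "f i = f j" using fk by simp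
  thus False using finj ij(1) inj_eq by metis
qed

end
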